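(* Let $n,q\ge1$ and let $c_1,c_2$ be integers with $c_1+c_2=-2$. If there exist a $PComS(n,q,c_1)$ and a $PComS(n,q,c_2)$, then there exists a partial Hadamard matrix $PH(2n\times 2(nq+1))$.
   Context: $\mathbb{Z}_2^n$ is the set of sequences $X=(x_0,\dots,x_{n-1})$ with entries in $\{+1,-1\}$, indices mod $n$. The periodic autocorrelation is $\mathsf{P}_X(k)=\sum_{i=0}^{n-1}x_ix_{i+k}$; it depends only on the cyclic-shift class $X_C$. A $PComS(n,q,c)$ is a list (repetitions allowed) of $q$ cyclic-shift classes $A_{1C},\dots,A_{qC}$ with $A_i\in\mathbb{Z}_2^n$ such that $\sum_{i=1}^q\mathsf{P}_{A_i}(k)=c$ for all $1\le k\le n-1$. A partial Hadamard matrix $PH(k\times m)$ is a $k\times m$ matrix $H$ with all entries in $\{+1,-1\}$ satisfying $HH^{t}=mI_k$. *)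

theory Defs
  imports Main
begin

text \<open>A sequence in Z_2^n is represented by a function x :: nat => int whose entries
  x 0, ..., x (n-1) lie in {1,-1}; indices are taken mod n.\<close>

definition pm1_seq :: "nat \<Rightarrow> (nat \<Rightarrow> int) \<Rightarrow> bool" where
  "pm1_seq n x \<longleftrightarrow> (\<forall>i<n. x i = 1 \<or> x i = -1)"

definition paf :: "nat \<Rightarrow> (nat \<Rightarrow> int) \<Rightarrow> nat \<Rightarrow> int" where
  "paf n x k = (\<Sum>i<n. x i * x ((i + k) mod n))"

text \<open>A PComS(n,q,c): q sequences (each representing its cyclic-shift class;
  the periodic autocorrelation is shift-invariant) whose periodic autocorrelations
  sum to c at every nontrivial shift.\<close>

definition PComS :: "nat \<Rightarrow> nat \<Rightarrow> int \<Rightarrow> (nat \<Rightarrow> int) list \<Rightarrow> bool" where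
  "PComS n q c As \<longleftrightarrow> length As = q \<and> (\<forall>A\<in>set As. pm1_seq n A) \<and>
     (\<forall>k. 1 \<le> k \<and> k \<le> n - 1 \<longrightarrow> (\<Sum>A\<leftarrow>As. paf n A k) = c)"

definition partial_hadamard :: "nat \<Rightarrow> nat \<Rightarrow> (nat \<Rightarrow> nat \<Rightarrow> int) \<Rightarrow> bool" where
  "partial_hadamard k m H \<longleftrightarrow>
     (\<forall>i<k. \<forall>j<m. H i j = 1 \<or> H i j = -1) \<and>
     (\<forall>i<k. \<forall>i'<k. (\<Sum>j<m. H i j * H i' j) = (if i = i' then int m else 0))"

end

theory Submission imports Defs begin

lemma nat_mod_lt: "n > 0 \<Longrightarrow> nat (m mod int n) < n"
  by (simp add: nat_less_iff)

lemma bij_shift: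
  assumes "n > 0"
  shows "bij_betw (\<lambda>s. nat ((int s + c) mod int n)) {..<n} {..<n}"
proof -
  let ?f = "\<lambda>s. nat ((int s + c) mod int n)"
  have inj: "inj_on ?f {..<n}"
  proof (rule inj_onI)
    fix x y assume xy: "x \<in> {..<n}" "y \<in> {..<n}" "?f x = ?f y"
    then have "(int x + c) mod int n = (int y + c) mod int n"
      using assms by (simp add: eq_nat_nat_iff)
    then have "((int x + c) + (-c)) mod int n = ((int y + c) + (-c)) mod int n"
      by (metis mod_add_left_eq)
    then have "int x mod int n = int y mod int n" by simp
    then show "x = y" using xy by simp
  qed
  have sub: "?f ` {..<n} \<subseteq> {..<n}" using assms nat_mod_lt by auto
  have "?f ` {..<n} = {..<n}" by (rule endo_inj_surj[OF _ sub inj]) simp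
  then show ?thesis using inj by (simp add: bij_betw_def)
qed

lemma bij_refl:
  assumes "n > 0"
  shows "bij_betw (\<lambda>s. nat ((c - int s) mod int n)) {..<n} {..<n}"
proof -
  let ?f = "\<lambda>s. nat ((c - int s) mod int n)"
  have inj: "inj_on ?f {..<n}"
  proof (rule inj_onI)
    fix x y assume xy: "x \<in> {..<n}" "y \<in> {..<n}" "?f x = ?f y"
    then have "(c - int x) mod int n = (c - int y) mod int n"
      using assms by (simp add: eq_nat_nat_iff)
    then have "(c - (c - int x)) mod int n = (c - (c - int y)) mod int n"
      by (metis mod_diff_right_eq)
    then have "int x mod int n = int y mod int n" by simp
    then show "x = y" using xy by simp
  qed
  have sub: "?f ` {..<n} \<subseteq> {..<n}" using assms nat_mod_lt by auto
  have "?f ` {..<n} = {..<n}" by (rule endo_inj_surj[OF _ sub inj]) simp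
  then show ?thesis using inj by (simp add: bij_betw_def)
qed

lemma sum_shift:
  assumes "n > 0"
  shows "(\<Sum>s<n. h (nat ((int s + c) mod int n))) = (\<Sum>s<n. (h s::int))"
  using sum.reindex_bij_betw[OF bij_shift[OF assms], of h] by simp

lemma sum_refl:
  assumes "n > 0"
  shows "(\<Sum>s<n. h (nat ((c - int s) mod int n))) = (\<Sum>s<n. (h s::int))"
  using sum.reindex_bij_betw[OF bij_refl[OF assms], of h] by simp

lemma mod_mod_nat: "n > 0 \<Longrightarrow> int (nat (m mod int n)) = m mod int n"
  by simp

lemma autocorr:
  assumes "n > 0"
  shows "(\<Sum>s<n. a (nat ((int s + c1) mod int n)) * a (nat ((int s + c2) mod int n)))
         = paf n a (nat ((c2 - c1) mod int n))"
proof -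
  let ?h = "\<lambda>u. a (nat ((int u + c1) mod int n)) * a (nat ((int u + c2) mod int n))"
  have "(\<Sum>s<n. ?h s) = (\<Sum>s<n. ?h (nat ((int s + (-c1)) mod int n)))"
    using sum_shift[OF assms, of ?h "-c1"] by simp
  also have "\<dots> = (\<Sum>s<n. a s * a ((s + nat ((c2 - c1) mod int n)) mod n))"
  proof (rule sum.cong[OF refl])
    fix s assume s: "s \<in> {..<n}"
    have e1: "nat ((int (nat ((int s + - c1) mod int n)) + c1) mod int n) = s"
      using assms s by (simp add: mod_add_left_eq)
    have "int ((s + nat ((c2 - c1) mod int n)) mod n) = (int s + (c2 - c1) mod int n) mod int n"
      using assms by (simp add: zmod_int)
    also have "\<dots> = (int (nat ((int s + - c1) mod int n)) + c2) mod int n"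
      using assms by (simp add: mod_add_left_eq mod_add_right_eq algebra_simps)
    finally have e2: "nat ((int (nat ((int s + - c1) mod int n)) + c2) mod int n) = (s + nat ((c2 - c1) mod int n)) mod n"
      by linarith
    show "?h (nat ((int s + (-c1)) mod int n)) = a s * a ((s + nat ((c2 - c1) mod int n)) mod n)"
      by (simp only: e1 e2)
  qed
  finally show ?thesis by (simp add: paf_def)
qed


lemma cross:
  fixes a b :: "nat \<Rightarrow> int"
  assumes "n > 0"
  shows "(\<Sum>s<n. a (nat ((int s - x) mod int n)) * b (nat ((y - int s) mod int n)))
       = (\<Sum>s<n. b (nat ((int s - x) mod int n)) * a (nat ((y - int s) mod int n)))"
proof -
  let ?h = "\<lambda>u. b (nat ((int u - x) mod int n)) * a (nat ((y - int u) mod int n))"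
  have "(\<Sum>s<n. ?h s) = (\<Sum>s<n. ?h (nat ((x + y - int s) mod int n)))"
    using sum_refl[OF assms, of ?h "x + y"] by simp
  also have "\<dots> = (\<Sum>s<n. a (nat ((int s - x) mod int n)) * b (nat ((y - int s) mod int n)))"
  proof (rule sum.cong[OF refl])
    fix s assume s: "s \<in> {..<n}"
    have e0: "int (nat ((x + y - int s) mod int n)) = (x + y - int s) mod int n" using assms by simp
    have "(int (nat ((x + y - int s) mod int n)) - x) mod int n = ((x + y - int s) - x) mod int n"
      by (simp only: e0 mod_diff_left_eq)
    then have e1: "(int (nat ((x + y - int s) mod int n)) - x) mod int n = (y - int s) mod int n"
      by simp
    have "(y - int (nat ((x + y - int s) mod int n))) mod int n = (y - (x + y - int s)) mod int n"
      by (simp only: e0 mod_diff_right_eq)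
    then have e2: "(y - int (nat ((x + y - int s) mod int n))) mod int n = (int s - x) mod int n"
      by simp
    show "?h (nat ((x + y - int s) mod int n)) = a (nat ((int s - x) mod int n)) * b (nat ((y - int s) mod int n))"
      by (simp only: e1 e2 mult.commute)
  qed
  finally show ?thesis by simp
qed

lemma autocorr_top:
  fixes a :: "nat \<Rightarrow> int"
  assumes "n > 0"
  shows "(\<Sum>s<n. a (nat ((int s - x) mod int n)) * a (nat ((int s - y) mod int n)))
         = paf n a (nat ((x - y) mod int n))"
  using autocorr[OF assms, of a "-x" "-y"] by simp

lemma autocorr_bot:
  fixes a :: "nat \<Rightarrow> int"
  assumes "n > 0"
  shows "(\<Sum>s<n. a (nat ((x - int s) mod int n)) * a (nat ((y - int s) mod int n)))
         = paf n a (nat ((y - x) mod int n))"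
proof -
  let ?h = "\<lambda>u. a (nat ((x - int u) mod int n)) * a (nat ((y - int u) mod int n))"
  have "(\<Sum>s<n. ?h s) = (\<Sum>s<n. ?h (nat ((0 - int s) mod int n)))"
    using sum_refl[OF assms, of ?h 0] by simp
  also have "\<dots> = (\<Sum>s<n. a (nat ((int s + x) mod int n)) * a (nat ((int s + y) mod int n)))"
  proof (rule sum.cong[OF refl])
    fix s assume s: "s \<in> {..<n}"
    have e0: "int (nat ((0 - int s) mod int n)) = (0 - int s) mod int n" using assms by simp
    have e1: "(z - int (nat ((0 - int s) mod int n))) mod int n = (int s + z) mod int n" for z
    proof -
      have "(z - int (nat ((0 - int s) mod int n))) mod int n = (z - (0 - int s)) mod int n"
        by (simp only: e0 mod_diff_right_eq)
      then show ?thesis by (simp add: add.commute)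
    qed
    show "?h (nat ((0 - int s) mod int n)) = a (nat ((int s + x) mod int n)) * a (nat ((int s + y) mod int n))"
      by (simp only: e1)
  qed
  also have "\<dots> = paf n a (nat ((y - x) mod int n))" by (rule autocorr[OF assms])
  finally show ?thesis .
qed

lemma sum_add_split: "(\<Sum>j<a+(b::nat). g j) = (\<Sum>j<a. g j) + (\<Sum>s<b. (g (a+s) :: int))"
  by (induction b) (auto simp: add.assoc)

lemma sum_blocks: "(\<Sum>j<(m::nat)*n. g j) = (\<Sum>t<m. \<Sum>s<n. (g (t*n+s) :: int))"
proof (induction m)
  case 0 then show ?case by simp
next
  case (Suc m)
  have "(\<Sum>j<Suc m*n. g j) = (\<Sum>j<m*n + n. g j)" by (simp add: add.commute)
  also have "\<dots> = (\<Sum>j<m*n. g j) + (\<Sum>s<n. g (m*n+s))" by (rule sum_add_split)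
  finally show ?case using Suc by simp
qed

lemma PComS_sum:
  assumes "PComS n q c As" "1 \<le> k" "k \<le> n - 1"
  shows "(\<Sum>t<q. paf n (As!t) k) = c"
proof -
  have "length As = q" using assms by (simp add: PComS_def)
  have "(\<Sum>A\<leftarrow>As. paf n A k) = c" using assms by (simp add: PComS_def)
  moreover have "(\<Sum>A\<leftarrow>As. paf n A k) = (\<Sum>t<q. paf n (As!t) k)"
    using \<open>length As = q\<close> by (simp add: sum_list_sum_nth atLeast0LessThan)
  ultimately show ?thesis by simp
qed


definition Eblk :: "nat \<Rightarrow> nat \<Rightarrow> (nat \<Rightarrow> int) list \<Rightarrow> (nat \<Rightarrow> int) list \<Rightarrow> nat \<Rightarrow> nat \<Rightarrow> nat \<Rightarrow> int" where
  "Eblk n q As Bs i t s = (if i < n then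
      (if t < q then (As!t) (nat ((int s - int i) mod int n)) else (Bs!(t-q)) (nat ((int s - int i) mod int n)))
    else (if t < q then (Bs!t) (nat ((int (i-n) - int s) mod int n))
          else - (As!(t-q)) (nat ((int (i-n) - int s) mod int n))))"

definition Hmat :: "nat \<Rightarrow> nat \<Rightarrow> (nat \<Rightarrow> int) list \<Rightarrow> (nat \<Rightarrow> int) list \<Rightarrow> nat \<Rightarrow> nat \<Rightarrow> int" where
  "Hmat n q As Bs i j = (if j = 0 then 1 else if j = 1 then (if i < n then 1 else -1)
     else Eblk n q As Bs i ((j-2) div n) ((j-2) mod n))"

lemma row_sum:
  assumes "n > 0"
  shows "(\<Sum>j<2*(n*q+1). Hmat n q As Bs i j * Hmat n q As Bs i' j)
    = Hmat n q As Bs i 0 * Hmat n q As Bs i' 0 + Hmat n q As Bs i 1 * Hmat n q As Bs i' 1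
      + (\<Sum>t<q. \<Sum>s<n. Eblk n q As Bs i t s * Eblk n q As Bs i' t s)
      + (\<Sum>t<q. \<Sum>s<n. Eblk n q As Bs i (q+t) s * Eblk n q As Bs i' (q+t) s)"
proof -
  let ?g = "\<lambda>j. Hmat n q As Bs i j * Hmat n q As Bs i' j"
  have "2*(n*q+1) = Suc (Suc ((q+q)*n))" by simp
  then have "(\<Sum>j<2*(n*q+1). ?g j) = ?g 0 + (?g 1 + (\<Sum>j<(q+q)*n. ?g (Suc (Suc j))))"
    by (simp only: sum.lessThan_Suc_shift) simp
  also have "(\<Sum>j<(q+q)*n. ?g (Suc (Suc j))) = (\<Sum>t<q+q. \<Sum>s<n. ?g (Suc (Suc (t*n+s))))"
    by (rule sum_blocks)
  also have "\<dots> = (\<Sum>t<q. \<Sum>s<n. ?g (Suc (Suc (t*n+s)))) + (\<Sum>t<q. \<Sum>s<n. ?g (Suc (Suc ((q+t)*n+s))))"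
    by (rule sum_add_split)
  also have "(\<Sum>t<q. \<Sum>s<n. ?g (Suc (Suc (t*n+s)))) = (\<Sum>t<q. \<Sum>s<n. Eblk n q As Bs i t s * Eblk n q As Bs i' t s)"
    using assms by (intro sum.cong refl) (simp add: Hmat_def)
  also have "(\<Sum>t<q. \<Sum>s<n. ?g (Suc (Suc ((q+t)*n+s)))) = (\<Sum>t<q. \<Sum>s<n. Eblk n q As Bs i (q+t) s * Eblk n q As Bs i' (q+t) s)"
    using assms by (intro sum.cong refl) (simp add: Hmat_def)
  finally show ?thesis by simp
qed


lemma knz:
  assumes "i < n" "i' < n" "i \<noteq> i'"
  shows "(int i - int i') mod int n \<noteq> 0"
proof
  assume "(int i - int i') mod int n = 0"
  then have "int i mod int n = int i' mod int n" by (simp add: mod_eq_dvd_iff dvd_eq_mod_eq_0)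
  then show False using assms by simp
qed

lemma k_range:
  assumes "i < n" "i' < n" "i \<noteq> i'"
  shows "1 \<le> nat ((int i - int i') mod int n) \<and> nat ((int i - int i') mod int n) \<le> n - 1"
proof -
  have "n > 0" using assms by simp
  then have "nat ((int i - int i') mod int n) < n" by (rule nat_mod_lt)
  moreover have "(int i - int i') mod int n \<noteq> 0" using knz[OF assms] .
  moreover have "(int i - int i') mod int n \<ge> 0" using \<open>n > 0\<close> by simp
  ultimately show ?thesis by linarith
qed

lemma entries:
  assumes n: "n > 0" and A: "PComS n q c1 As" and B: "PComS n q c2 Bs"
    and j: "j < 2*(n*q+1)"
  shows "Hmat n q As Bs i j = 1 \<or> Hmat n q As Bs i j = -1"
proof (cases "j \<le> 1")
  case True then show ?thesis by (auto simp: Hmat_def)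
next
  case False
  let ?t = "(j-2) div n" and ?s = "(j-2) mod n"
  have "j - 2 < (q+q) * n" using j False by (simp add: algebra_simps)
  then have t: "?t < q+q" by (simp add: less_mult_imp_div_less)
  have lA: "length As = q" and lB: "length Bs = q" using A B by (auto simp: PComS_def)
  have pA: "\<And>t m. t < q \<Longrightarrow> (As!t) (nat (m mod int n)) = 1 \<or> (As!t) (nat (m mod int n)) = -1"
  proof -
    fix t m assume "t < q"
    then have "As!t \<in> set As" using lA by simp
    then have "pm1_seq n (As!t)" using A by (auto simp: PComS_def)
    then show "(As!t) (nat (m mod int n)) = 1 \<or> (As!t) (nat (m mod int n)) = -1"
      using nat_mod_lt[OF n] by (simp add: pm1_seq_def)
  qed
  have pB: "\<And>t m. t < q \<Longrightarrow> (Bs!t) (nat (m mod int n)) = 1 \<or> (Bs!t) (nat (m mod int n)) = -1"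
  proof -
    fix t m assume "t < q"
    then have "Bs!t \<in> set Bs" using lB by simp
    then have "pm1_seq n (Bs!t)" using B by (auto simp: PComS_def)
    then show "(Bs!t) (nat (m mod int n)) = 1 \<or> (Bs!t) (nat (m mod int n)) = -1"
      using nat_mod_lt[OF n] by (simp add: pm1_seq_def)
  qed
  have "Eblk n q As Bs i ?t ?s = 1 \<or> Eblk n q As Bs i ?t ?s = -1"
  proof -
    have t2: "\<not> ?t < q \<Longrightarrow> ?t - q < q" using t by arith
    show ?thesis
      unfolding Eblk_def using t2 pA[of ?t] pB[of ?t] pA[of "?t - q"] pB[of "?t - q"]
      by (auto split: if_splits)
  qed
  then show ?thesis using False by (simp add: Hmat_def)
qed

theorem theorem21:
  fixes n q :: nat and c1 c2 :: int
  assumes "n \<ge> 1" and "q \<ge> 1" and "c1 + c2 = -2"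
    and "\<exists>As. PComS n q c1 As" and "\<exists>Bs. PComS n q c2 Bs"
  shows "\<exists>H. partial_hadamard (2 * n) (2 * (n * q + 1)) H"
proof -
  obtain As where A: "PComS n q c1 As" using assms by blast
  obtain Bs where B: "PComS n q c2 Bs" using assms by blast
  have n: "n > 0" using assms by simp
  let ?H = "Hmat n q As Bs"
  let ?E = "Eblk n q As Bs"
  let ?m = "2*(n*q+1)"
  have ent: "\<And>i j. j < ?m \<Longrightarrow> ?H i j = 1 \<or> ?H i j = -1"
    using entries[OF n A B] by blast
  have diag: "(\<Sum>j<?m. ?H i j * ?H i j) = int ?m" for i
  proof -
    have "(\<Sum>j<?m. ?H i j * ?H i j) = (\<Sum>j<?m. 1)"
    proof (rule sum.cong[OF refl])
      fix x assume "x \<in> {..<?m}"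
      then have "?H i x = 1 \<or> ?H i x = -1" using ent by blast
      then show "?H i x * ?H i x = 1" by auto
    qed
    then show ?thesis by simp
  qed
  have tb: "(\<Sum>j<?m. ?H i j * ?H i' j) = 0" if i: "i < n" and i': "n \<le> i'" for i i'
  proof -
    have e1: "(\<Sum>t<q. \<Sum>s<n. ?E i t s * ?E i' t s)
       = (\<Sum>t<q. \<Sum>s<n. (As!t) (nat ((int s - int i) mod int n)) * (Bs!t) (nat ((int (i'-n) - int s) mod int n)))"
      using i i' by (intro sum.cong refl) (simp add: Eblk_def)
    have e2: "(\<Sum>t<q. \<Sum>s<n. ?E i (q+t) s * ?E i' (q+t) s)
       = - (\<Sum>t<q. \<Sum>s<n. (Bs!t) (nat ((int s - int i) mod int n)) * (As!t) (nat ((int (i'-n) - int s) mod int n)))"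
      using i i' by (simp add: Eblk_def sum_negf[symmetric])
    have e3: "(\<Sum>t<q. \<Sum>s<n. (As!t) (nat ((int s - int i) mod int n)) * (Bs!t) (nat ((int (i'-n) - int s) mod int n)))
       = (\<Sum>t<q. \<Sum>s<n. (Bs!t) (nat ((int s - int i) mod int n)) * (As!t) (nat ((int (i'-n) - int s) mod int n)))"
      by (intro sum.cong refl cross[OF n])
    show ?thesis using i i' unfolding row_sum[OF n] e1 e2 e3 by (simp add: Hmat_def)
  qed
  have tt: "(\<Sum>j<?m. ?H i j * ?H i' j) = 0" if i: "i < n" and i': "i' < n" and ne: "i \<noteq> i'" for i i'
  proof -
    define k where "k = nat ((int i - int i') mod int n)"
    have k: "1 \<le> k" "k \<le> n - 1" using k_range[OF i i' ne] k_def by auto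
    have e1: "(\<Sum>t<q. \<Sum>s<n. ?E i t s * ?E i' t s) = (\<Sum>t<q. paf n (As!t) k)"
      using i i' by (intro sum.cong refl) (simp add: Eblk_def autocorr_top[OF n] k_def)
    have e2: "(\<Sum>t<q. \<Sum>s<n. ?E i (q+t) s * ?E i' (q+t) s) = (\<Sum>t<q. paf n (Bs!t) k)"
      using i i' by (intro sum.cong refl) (simp add: Eblk_def autocorr_top[OF n] k_def)
    show ?thesis using i i' assms(3) unfolding row_sum[OF n] e1 e2 PComS_sum[OF A k] PComS_sum[OF B k]
      by (simp add: Hmat_def)
  qed
  have bb: "(\<Sum>j<?m. ?H i j * ?H i' j) = 0" if i: "n \<le> i" "i < 2*n" and i': "n \<le> i'" "i' < 2*n" and ne: "i \<noteq> i'" for i i'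
  proof -
    define k where "k = nat ((int (i'-n) - int (i-n)) mod int n)"
    have k: "1 \<le> k" "k \<le> n - 1" using k_range[of "i'-n" n "i-n"] i i' ne k_def by auto
    have e1: "(\<Sum>t<q. \<Sum>s<n. ?E i t s * ?E i' t s) = (\<Sum>t<q. paf n (Bs!t) k)"
      using i i' by (intro sum.cong refl) (simp add: Eblk_def autocorr_bot[OF n] k_def)
    have e2: "(\<Sum>t<q. \<Sum>s<n. ?E i (q+t) s * ?E i' (q+t) s) = (\<Sum>t<q. paf n (As!t) k)"
      using i i' by (intro sum.cong refl) (simp add: Eblk_def autocorr_bot[OF n] k_def)
    show ?thesis using i i' assms(3) unfolding row_sum[OF n] e1 e2 PComS_sum[OF A k] PComS_sum[OF B k]
      by (simp add: Hmat_def)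
  qed
  have "partial_hadamard (2 * n) ?m ?H"
    unfolding partial_hadamard_def
  proof (intro conjI allI impI)
    fix i j assume "i < 2*n" "j < ?m"
    then show "?H i j = 1 \<or> ?H i j = -1" using ent by blast
  next
    fix i i' assume i: "i < 2*n" and i': "i' < 2*n"
    show "(\<Sum>j<?m. ?H i j * ?H i' j) = (if i = i' then int ?m else 0)"
    proof (cases "i = i'")
      case True then show ?thesis using diag by simp
    next
      case False
      have sym: "(\<Sum>j<?m. ?H i j * ?H i' j) = (\<Sum>j<?m. ?H i' j * ?H i j)"
        by (simp add: mult.commute)
      consider "i < n" "i' < n" | "i < n" "n \<le> i'" | "n \<le> i" "i' < n" | "n \<le> i" "n \<le> i'" by linarith
      then show ?thesis
      proof cases
        case 1 then show ?thesis using tt False by simp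
      next
        case 2 then show ?thesis using tb False by simp
      next
        case 3 then show ?thesis using tb[of i' i] sym False by simp
      next
        case 4 then show ?thesis using bb i i' False by simp
      qed
    qed
  qed
  then show ?thesis by blast
qed

end
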